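(* The family $\mathcal D_n$ of derangements of $[n]$ is $\left(\frac n{12},\frac n4\right)$-spread.
   Context: A derangement is a permutation of $[n]$ without fixed points; each permutation is identified with its graph $\{(i,\sigma(i)):i\in[n]\}\subset[n]^2$. For a family $\mathcal{F}$ of subsets of $[n]^2$ and $X\subset[n]^2$, $\mathcal{F}(X):=\{F\setminus X: X\subset F\in\mathcal{F}\}$. $\mathcal{F}$ is $r$-spread if $|\mathcal{F}(X)|\le r^{-|X|}|\mathcal{F}|$ for all $X$, and $(r,q)$-spread if $\mathcal{F}(A)$ is $r$-spread for every $A\subset[n]^2$ with $|A|\le q$. *)

theory Defs
  imports "HOL-Combinatorics.Permutations" Complex_Main
begin

definition graph_on :: "nat \<Rightarrow> (nat \<Rightarrow> nat) \<Rightarrow> (nat \<times> nat) set" where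
  "graph_on n \<sigma> = {(i, \<sigma> i) | i. i \<in> {1..n}}"

definition derangements :: "nat \<Rightarrow> (nat \<times> nat) set set" where
  "derangements n = {graph_on n \<sigma> | \<sigma>. \<sigma> permutes {1..n} \<and> (\<forall>i\<in>{1..n}. \<sigma> i \<noteq> i)}"

definition restr :: "'a set set \<Rightarrow> 'a set \<Rightarrow> 'a set set" where
  "restr \<F> X = {F - X | F. F \<in> \<F> \<and> X \<subseteq> F}"

definition r_spread :: "real \<Rightarrow> 'a set set \<Rightarrow> bool" where
  "r_spread r \<F> \<longleftrightarrow> (\<forall>X. real (card (restr \<F> X)) \<le> (inverse r) ^ card X * real (card \<F>))"

definition rq_spread :: "'a set \<Rightarrow> real \<Rightarrow> real \<Rightarrow> 'a set set \<Rightarrow> bool" where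
  "rq_spread V r q \<F> \<longleftrightarrow> (\<forall>A. A \<subseteq> V \<and> real (card A) \<le> q \<longrightarrow> r_spread r (restr \<F> A))"

end

theory Submission
  imports Defs
begin


lemma exp_bound:
  fixes M :: real and k :: nat
  assumes "M > 0" "real k \<le> M"
  shows "(M + 1) ^ k \<le> 3 * M ^ k"
proof -
  have "(1 + 1/M) ^ k \<le> exp (1/M) ^ k"
    by (rule power_mono) (use exp_ge_add_one_self[of "1/M"] in \<open>auto simp: add.commute\<close>, smt (verit, best) assms(1) divide_pos_pos)
  also have "\<dots> = exp (real k / M)" by (simp add: exp_of_nat_mult[symmetric])
  also have "\<dots> \<le> exp 1" using assms by (simp add: divide_le_eq)
  also have "\<dots> \<le> 3" by (rule exp_le)
  finally have "(1 + 1/M) ^ k \<le> 3" .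
  moreover have "(M + 1) ^ k = M ^ k * (1 + 1/M) ^ k"
    using assms by (simp add: power_mult_distrib[symmetric] field_simps)
  ultimately show ?thesis using assms
    by (metis mult.commute mult_left_mono zero_le_power less_imp_le)
qed

lemma falling_bound:
  "k \<le> N \<Longrightarrow> (real N / 3) ^ k \<le> (\<Prod>t<k. real N - real t)"
proof (induction k arbitrary: N)
  case 0 then show ?case by simp
next
  case (Suc k)
  then have N1: "N \<ge> 1" by simp
  have IH: "(real (N - 1) / 3) ^ k \<le> (\<Prod>t<k. real (N - 1) - real t)"
    using Suc.IH[of "N - 1"] Suc.prems by simp
  have eq: "(\<Prod>t<Suc k. real N - real t) = real N * (\<Prod>t<k. real (N - 1) - real t)"
    unfolding prod.lessThan_Suc_shift using N1 by (simp add: of_nat_diff diff_diff_eq del: prod.lessThan_Suc)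
  have key: "(real N / 3) ^ Suc k \<le> real N * (real (N - 1) / 3) ^ k"
  proof (cases "k = 0")
    case True then show ?thesis by simp
  next
    case False
    then have "N \<ge> 2" using Suc by simp
    define M where "M = real N - 1"
    have M: "M > 0" "real k \<le> M" using \<open>N \<ge> 2\<close> Suc.prems by (auto simp: M_def)
    have "(M + 1) ^ k \<le> 3 * M ^ k" by (rule exp_bound[OF M])
    then have "real N ^ k \<le> 3 * real (N - 1) ^ k" using N1 by (simp add: M_def of_nat_diff)
    then have "real N * real N ^ k / 3 ^ Suc k \<le> real N * (3 * real (N - 1) ^ k) / 3 ^ Suc k"
      by (intro divide_right_mono mult_left_mono) auto
    then show ?thesis by (simp add: power_divide field_simps)
  qed
  also have "\<dots> \<le> real N * (\<Prod>t<k. real (N - 1) - real t)"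
    by (rule mult_left_mono[OF IH]) simp
  finally show ?case using eq by simp
qed



definition der :: "nat \<Rightarrow> (nat \<Rightarrow> nat) set" where
  "der n = {\<sigma>. \<sigma> permutes {1..n} \<and> (\<forall>i\<in>{1..n}. \<sigma> i \<noteq> i)}"

definition cnt :: "nat \<Rightarrow> (nat \<times> nat) set \<Rightarrow> nat" where
  "cnt n B = card {\<sigma> \<in> der n. B \<subseteq> graph_on n \<sigma>}"

lemma mem_graph: "(x, y) \<in> graph_on n \<sigma> \<longleftrightarrow> x \<in> {1..n} \<and> y = \<sigma> x"
  by (auto simp: graph_on_def)

lemma finite_der: "finite (der n)"
  unfolding der_def by (rule finite_subset[OF _ finite_permutations[of "{1..n}"]]) auto

lemma graph_inj: "inj_on (graph_on n) (der n)"
proof (rule inj_onI)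
  fix \<sigma> \<tau> assume s: "\<sigma> \<in> der n" "\<tau> \<in> der n" "graph_on n \<sigma> = graph_on n \<tau>"
  show "\<sigma> = \<tau>"
  proof
    fix x show "\<sigma> x = \<tau> x"
    proof (cases "x \<in> {1..n}")
      case True
      then have "(x, \<sigma> x) \<in> graph_on n \<tau>" using s(3) mem_graph by metis
      then show ?thesis by (simp add: mem_graph)
    next
      case False
      then show ?thesis using s(1,2) unfolding der_def by (metis (mono_tags) mem_Collect_eq permutes_not_in)
    qed
  qed
qed

lemma card_graph: "card (graph_on n \<sigma>) = n"
proof -
  have "graph_on n \<sigma> = (\<lambda>i. (i, \<sigma> i)) ` {1..n}" by (auto simp: graph_on_def)
  moreover have "inj_on (\<lambda>i. (i, \<sigma> i)) {1..n}" by (auto intro: inj_onI)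
  ultimately show ?thesis by (simp add: card_image)
qed

lemma derangements_eq: "derangements n = graph_on n ` der n"
  by (auto simp: derangements_def der_def)

lemma finite_derangements: "finite (derangements n)"
  by (simp add: derangements_eq finite_der)

lemma card_restr:
  assumes "finite G" shows "card (restr G X) = card {F \<in> G. X \<subseteq> F}"
proof -
  have "restr G X = (\<lambda>F. F - X) ` {F \<in> G. X \<subseteq> F}" by (auto simp: restr_def)
  moreover have "inj_on (\<lambda>F. F - X) {F \<in> G. X \<subseteq> F}"
    by (rule inj_onI) (metis (no_types, lifting) Diff_partition mem_Collect_eq)
  ultimately show ?thesis by (simp add: card_image)
qed

lemma card_der_cnt: "card {F \<in> derangements n. B \<subseteq> F} = cnt n B"
proof -
  have "{F \<in> derangements n. B \<subseteq> F} = graph_on n ` {\<sigma> \<in> der n. B \<subseteq> graph_on n \<sigma>}"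
    by (auto simp: derangements_eq)
  moreover have "inj_on (graph_on n) {\<sigma> \<in> der n. B \<subseteq> graph_on n \<sigma>}"
    using graph_inj by (rule inj_on_subset) auto
  ultimately show ?thesis by (simp add: card_image cnt_def)
qed

lemma restr_restr: "restr (restr G A) X = (if A \<inter> X = {} then restr G (A \<union> X) else {})"
proof (cases "A \<inter> X = {}")
  case True
  have "restr (restr G A) X = restr G (A \<union> X)"
  proof (intro equalityI subsetI)
    fix Y assume "Y \<in> restr (restr G A) X"
    then obtain F where "F \<in> G" "A \<subseteq> F" "X \<subseteq> F - A" "Y = F - A - X" by (auto simp: restr_def)
    then show "Y \<in> restr G (A \<union> X)" unfolding restr_def by (intro CollectI exI[of _ F]) auto
  next
    fix Y assume "Y \<in> restr G (A \<union> X)"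
    then obtain F where "F \<in> G" "A \<union> X \<subseteq> F" "Y = F - (A \<union> X)" by (auto simp: restr_def)
    then show "Y \<in> restr (restr G A) X" unfolding restr_def using True
      by (intro CollectI exI[of _ "F - A"]) blast
  qed
  then show ?thesis using True by simp
next
  case False
  then show ?thesis by (auto simp: restr_def)
qed

lemma switch:
  assumes B: "finite B" and e: "(i, j) \<notin> B"
  shows "(n - card B) * cnt n (insert (i, j) B) \<le> 3 * cnt n B"
proof -
  define S where "S = {\<sigma> \<in> der n. insert (i, j) B \<subseteq> graph_on n \<sigma>}"
  define T where "T = {\<sigma> \<in> der n. B \<subseteq> graph_on n \<sigma> \<and> (i, j) \<notin> graph_on n \<sigma>}"
  have fS: "finite S" and fT: "finite T" using finite_der by (auto simp: S_def T_def)
  have cB: "cnt n B = card S + card T"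
  proof -
    have "{\<sigma> \<in> der n. B \<subseteq> graph_on n \<sigma>} = S \<union> T" "S \<inter> T = {}" by (auto simp: S_def T_def)
    then show ?thesis unfolding cnt_def using fS fT by (simp add: card_Un_disjoint)
  qed
  have cI: "cnt n (insert (i, j) B) = card S" by (simp add: cnt_def S_def)
  define R where "R \<sigma> = {r \<in> {1..n}. r \<notin> fst ` B \<and> r \<noteq> i \<and> r \<noteq> j \<and> \<sigma> r \<noteq> i}" for \<sigma> :: "nat \<Rightarrow> nat"
  define \<Phi> where "\<Phi> p = fst p \<circ> Transposition.transpose i (snd p)" for p :: "(nat \<Rightarrow> nat) \<times> nat"
  have Rcard: "n - card B - 3 \<le> card (R \<sigma>)" if "\<sigma> \<in> S" for \<sigma>
  proof -
    have perm: "\<sigma> permutes {1..n}" using that by (simp add: S_def der_def)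
    have eqR: "R \<sigma> = {1..n} - fst ` B - {i, j, inv \<sigma> i}"
    proof -
      have iff: "\<sigma> r = i \<longleftrightarrow> r = inv \<sigma> i" for r using permutes_inv_eq[OF perm] by metis
      show ?thesis unfolding R_def using iff by blast
    qed
    have h2: "n - card B \<le> card ({1..n} - fst ` B)"
    proof -
      have "card {1..n} - card (fst ` B) \<le> card ({1..n} - fst ` B)"
        using B by (intro diff_card_le_card_Diff) auto
      moreover have "card (fst ` B) \<le> card B" using B by (rule card_image_le)
      ultimately show ?thesis by simp
    qed
    have h3: "card ({1..n} - fst ` B) - card {i, j, inv \<sigma> i} \<le> card ({1..n} - fst ` B - {i, j, inv \<sigma> i})"
      by (intro diff_card_le_card_Diff) auto
    have h4: "card {i, j, inv \<sigma> i} \<le> 3" by (simp add: card_insert_le_m1)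
    show ?thesis unfolding eqR using h2 h3 h4 by linarith
  qed
  have map: "\<Phi> p \<in> T" if p: "p \<in> Sigma S R" for p
  proof -
    obtain \<sigma> r where pr: "p = (\<sigma>, r)" by (cases p)
    have s: "\<sigma> \<in> S" and r: "r \<in> R \<sigma>" using p pr by auto
    have perm: "\<sigma> permutes {1..n}" and der: "\<forall>x\<in>{1..n}. \<sigma> x \<noteq> x"
      and sub: "insert (i, j) B \<subseteq> graph_on n \<sigma>" using s by (auto simp: S_def der_def)
    have ij: "i \<in> {1..n}" "\<sigma> i = j" using sub by (auto simp: mem_graph)
    have rr: "r \<in> {1..n}" "r \<notin> fst ` B" "r \<noteq> i" "r \<noteq> j" "\<sigma> r \<noteq> i" using r by (auto simp: R_def)
    have P: "\<Phi> p = \<sigma> \<circ> Transposition.transpose i r" by (simp add: \<Phi>_def pr)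
    have p1: "\<Phi> p permutes {1..n}" unfolding P
      by (rule permutes_compose[OF permutes_swap_id[OF ij(1) rr(1)] perm])
    have p2: "\<forall>x\<in>{1..n}. \<Phi> p x \<noteq> x"
      using der rr ij unfolding P by (auto simp: Transposition.transpose_def)
    have inj: "inj \<sigma>" using perm by (rule permutes_inj)
    have p3: "B \<subseteq> graph_on n (\<Phi> p)"
    proof
      fix b assume b: "b \<in> B"
      obtain x y where xy: "b = (x, y)" by (cases b)
      have g: "x \<in> {1..n}" "y = \<sigma> x" using sub b xy by (auto simp: mem_graph)
      have "x \<noteq> i" using e b xy g ij by auto
      moreover have "x \<noteq> r" using rr(2) b xy by force
      ultimately show "b \<in> graph_on n (\<Phi> p)" using g xy unfolding P
        by (simp add: mem_graph Transposition.transpose_def)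
    qed
    have p4: "(i, j) \<notin> graph_on n (\<Phi> p)"
      using inj rr(3) ij unfolding P by (auto simp: mem_graph inj_eq)
    show ?thesis using p1 p2 p3 p4 by (simp add: T_def der_def)
  qed
  have injP: "inj_on \<Phi> (Sigma S R)"
  proof (rule inj_onI)
    fix p q assume p: "p \<in> Sigma S R" and q: "q \<in> Sigma S R" and eq: "\<Phi> p = \<Phi> q"
    obtain \<sigma> r where pr: "p = (\<sigma>, r)" by (cases p)
    obtain \<tau> r' where qr: "q = (\<tau>, r')" by (cases q)
    have ij1: "\<sigma> i = j" "\<tau> i = j" using p q pr qr by (auto simp: S_def mem_graph)
    have rr: "r \<noteq> i" "r' \<noteq> i" using p q pr qr by (auto simp: R_def)
    have "\<Phi> p permutes {1..n}" using map[OF p] by (simp add: T_def der_def)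
    then have injp: "inj (\<Phi> p)" by (rule permutes_inj)
    have "\<Phi> p r = j" using ij1 rr by (simp add: \<Phi>_def pr)
    moreover have "\<Phi> p r' = j" using ij1 rr eq by (simp add: \<Phi>_def qr)
    ultimately have "r = r'" using injp by (metis injD)
    moreover have "\<sigma> = \<tau>"
    proof
      fix x
      have "\<forall>x. \<sigma> (Transposition.transpose i r x) = \<tau> (Transposition.transpose i r x)"
        using eq \<open>r = r'\<close> by (simp add: \<Phi>_def pr qr fun_eq_iff)
      then have "\<sigma> (Transposition.transpose i r (Transposition.transpose i r x)) =
            \<tau> (Transposition.transpose i r (Transposition.transpose i r x))" by blast
      then show "\<sigma> x = \<tau> x" by simp
    qed
    ultimately show "p = q" using pr qr by simp
  qed
  have "card (Sigma S R) \<le> card T"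
    using card_inj_on_le[OF injP] map fT by blast
  moreover have "card (Sigma S R) = (\<Sum>\<sigma>\<in>S. card (R \<sigma>))"
    using fS by (intro card_SigmaI) (auto simp: R_def)
  moreover have "(\<Sum>\<sigma>\<in>S. n - card B - 3) \<le> (\<Sum>\<sigma>\<in>S. card (R \<sigma>))"
    by (intro sum_mono Rcard)
  ultimately have "card S * (n - card B - 3) \<le> card T" by simp
  then have "(n - card B) * card S \<le> card T + 3 * card S"
    by (simp add: algebra_simps diff_mult_distrib)
  then show ?thesis using cB cI by simp
qed



lemma cnt_mono: "B \<subseteq> C \<Longrightarrow> cnt n C \<le> cnt n B"
  unfolding cnt_def by (rule card_mono) (auto intro: finite_subset[OF _ finite_der])

lemma finite_graph: "finite (graph_on n \<sigma>)"
proof -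
  have "graph_on n \<sigma> = (\<lambda>i. (i, \<sigma> i)) ` {1..n}" by (auto simp: graph_on_def)
  then show ?thesis by simp
qed

lemma cnt_big: "n < card C \<Longrightarrow> cnt n C = 0"
proof -
  assume nC: "n < card C"
  have "\<not> C \<subseteq> graph_on n \<sigma>" for \<sigma>
  proof
    assume "C \<subseteq> graph_on n \<sigma>"
    then have "card C \<le> card (graph_on n \<sigma>)" by (rule card_mono[OF finite_graph])
    then show False using nC card_graph[of n \<sigma>] by simp
  qed
  then have "{\<sigma> \<in> der n. C \<subseteq> graph_on n \<sigma>} = {}" by blast
  then show ?thesis unfolding cnt_def by (metis card.empty)
qed

lemma chain:
  assumes "finite X"
  shows "finite B \<Longrightarrow> B \<inter> X = {} \<Longrightarrow>
    cnt n (B \<union> X) * (\<Prod>t<card X. n - card B - t) \<le> 3 ^ card X * cnt n B"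
  using assms
proof (induction X arbitrary: B rule: finite_induct)
  case empty then show ?case by simp
next
  case (insert x X)
  obtain i j where x: "x = (i, j)" by (cases x)
  have xB: "x \<notin> B" using insert.prems by auto
  have cB: "card (insert x B) = Suc (card B)" using xB insert.prems by simp
  have IH: "cnt n (insert x B \<union> X) * (\<Prod>t<card X. n - Suc (card B) - t) \<le> 3 ^ card X * cnt n (insert x B)"
    using insert.IH[of "insert x B"] insert.prems insert.hyps cB by auto
  have sw: "(n - card B) * cnt n (insert x B) \<le> 3 * cnt n B"
    using switch[of B i j n] insert.prems xB x by simp
  have eqU: "B \<union> insert x X = insert x B \<union> X" by auto
  have eqP: "(\<Prod>t<card (insert x X). n - card B - t) = (n - card B) * (\<Prod>t<card X. n - Suc (card B) - t)"
    using insert.hyps by (simp add: prod.lessThan_Suc_shift del: prod.lessThan_Suc)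
  have "cnt n (B \<union> insert x X) * (\<Prod>t<card (insert x X). n - card B - t)
      = (n - card B) * (cnt n (insert x B \<union> X) * (\<Prod>t<card X. n - Suc (card B) - t))"
    by (simp only: eqU eqP ac_simps)
  also have "\<dots> \<le> (n - card B) * (3 ^ card X * cnt n (insert x B))"
    by (rule mult_left_mono[OF IH]) simp
  also have "\<dots> = 3 ^ card X * ((n - card B) * cnt n (insert x B))" by (simp only: ac_simps)
  also have "\<dots> \<le> 3 ^ card X * (3 * cnt n B)"
    by (rule mult_left_mono[OF sw]) simp
  also have "\<dots> = 3 ^ card (insert x X) * cnt n B" using insert.hyps by simp
  finally show ?case .
qed

theorem lemma13:
  fixes n :: nat
  shows "rq_spread ({1..n} \<times> {1..n}) (real n / 12) (real n / 4) (derangements n)"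
  unfolding rq_spread_def r_spread_def
proof (intro allI impI)
  fix A X :: "(nat \<times> nat) set"
  assume AX: "A \<subseteq> {1..n} \<times> {1..n} \<and> real (card A) \<le> real n / 4"
  have fA: "finite A" using AX finite_subset by blast
  let ?G = "derangements n"
  have cA: "card (restr ?G A) = cnt n A"
    by (simp add: card_restr finite_derangements card_der_cnt)
  show "real (card (restr (restr ?G A) X)) \<le> inverse (real n / 12) ^ card X * real (card (restr ?G A))"
  proof (cases "A \<inter> X = {}")
    case False
    then show ?thesis by (simp add: restr_restr)
  next
    case disj: True
    have cAX: "card (restr (restr ?G A) X) = cnt n (A \<union> X)"
      using disj by (simp add: restr_restr card_restr finite_derangements card_der_cnt[symmetric])
    show ?thesis
    proof (cases "finite X \<and> X \<noteq> {}")
      case False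
      then have "cnt n (A \<union> X) \<le> cnt n A \<and> card X = 0" by (auto intro: cnt_mono)
      then show ?thesis by (simp add: cAX cA)
    next
      case True
      then have fX: "finite X" and kpos: "card X > 0" by (auto simp: card_gt_0_iff)
      have fAX: "finite (A \<union> X)" using fA fX by simp
      have cardAX: "card (A \<union> X) = card A + card X" using disj fA fX by (simp add: card_Un_disjoint)
      show ?thesis
      proof (cases "card X > n - card A")
        case True
        then have "n < card (A \<union> X)" using cardAX by linarith
        then have "cnt n (A \<union> X) = 0" using cnt_big by blast
        then show ?thesis by (simp add: cAX)
      next
        case False
        define N where "N = n - card A"
        define k where "k = card X"
        have kN: "k \<le> N" using False by (simp add: N_def k_def)
        then have npos: "n > 0" using kpos by (simp add: N_def k_def)
        have ch: "cnt n (A \<union> X) * (\<Prod>t<k. N - t) \<le> 3 ^ k * cnt n A"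
          using chain[OF fX fA] disj by (simp add: N_def k_def Int_commute)
        have rP: "real (\<Prod>t<k. N - t) = (\<Prod>t<k. real N - real t)"
          using kN by (simp add: of_nat_diff)
        have fb: "(real N / 3) ^ k \<le> real (\<Prod>t<k. N - t)" using falling_bound[OF kN] rP by simp
        have "real (cnt n (A \<union> X)) * (real N / 3) ^ k \<le> real (cnt n (A \<union> X)) * real (\<Prod>t<k. N - t)"
          by (rule mult_left_mono[OF fb]) simp
        also have "\<dots> \<le> 3 ^ k * real (cnt n A)" using ch
          by (metis of_nat_le_iff of_nat_mult of_nat_numeral of_nat_power)
        finally have h1: "real (cnt n (A \<union> X)) * (real N / 3) ^ k \<le> 3 ^ k * real (cnt n A)" .
        have "real N \<ge> 3 * real n / 4" using AX by (simp add: N_def of_nat_diff)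
        then have "real n / 12 \<le> (real N / 3) / 3" by simp
        then have "(real n / 12) ^ k \<le> ((real N / 3) / 3) ^ k" by (rule power_mono) simp
        then have "real (cnt n (A \<union> X)) * (real n / 12) ^ k \<le> real (cnt n (A \<union> X)) * ((real N / 3) / 3) ^ k"
          by (rule mult_left_mono) simp
        also have "\<dots> = real (cnt n (A \<union> X)) * (real N / 3) ^ k / 3 ^ k"
          by (simp only: power_divide[of "real N / 3"] times_divide_eq_right)
        also have "\<dots> \<le> real (cnt n A)" using h1 by (simp add: divide_le_eq mult.commute)
        finally have h2: "real (cnt n (A \<union> X)) * (real n / 12) ^ k \<le> real (cnt n A)" .
        have "inverse (real n / 12) ^ k * real (cnt n A) \<ge> inverse (real n / 12) ^ k * (real (cnt n (A \<union> X)) * (real n / 12) ^ k)"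
          by (rule mult_left_mono[OF h2]) simp
        moreover have "inverse (real n / 12) ^ k * (real (cnt n (A \<union> X)) * (real n / 12) ^ k) = real (cnt n (A \<union> X))"
          using npos by (simp add: power_inverse[symmetric] field_simps)
        ultimately have "real (cnt n (A \<union> X)) \<le> inverse (real n / 12) ^ k * real (cnt n A)" by linarith
        then show ?thesis by (simp only: cAX cA k_def)
      qed
    qed
  qed
qed

end
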